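(* Let $(\eta_k)_{k\in\mathbb N}$ be i.i.d. real random variables with $\mathbb{E}\eta_1=0$ and $\mathbb{E}\eta_1^2=1$, and let $\alpha>-1/2$. Fix $\gamma\in(0,(\sqrt5-1)/2)$, pick $\rho=\rho(\gamma)>0$ such that $$(1-\gamma)(1+\gamma)^2\big(2-\exp(4(1+\gamma)\rho c_\alpha^{-1/2})\big)>1,$$ and put $s_n=\exp(-n^{1-\gamma})$ for $n\in\mathbb N$. Then $$\limsup_{n\to\infty}f_\alpha(s_n)\sum_{k\ge M(s_n)+1}\frac{(\log k)^\alpha\,\tilde\eta_{k,\rho}(s_n)}{k^{1/2+s_n}}\le1+\gamma\quad\text{a.s.}$$
   Context: $M(s)=\lfloor 1/s\rfloor$ for $s>0$; $c_\alpha=\Gamma(1+2\alpha)/2^{2\alpha}$; $f_\alpha(s)=\big(s^{1+2\alpha}/(c_\alpha\log\log(1/s))\big)^{1/2}$ for $s\in(0,1/e)$. For $k\in\mathbb N$, $\rho>0$, $s\in(0,1/e)$, $\mathcal{A}_{k,\rho}(s)$ is the event $\Big\{|\eta_k|>\frac{\rho}{(\log k)^\alpha\log(1/s)}\Big(\frac{k^{1+s}}{s^{1+2\alpha}\log\log(1/s)}\Big)^{1/2}\Big\}$, $\mathcal{A}^c_{k,\rho}(s)$ its complement, and $\tilde\eta_{k,\rho}(s)=\eta_k\mathbf{1}_{\mathcal{A}^c_{k,\rho}(s)}-\mathbb{E}\big(\eta_k\mathbf{1}_{\mathcal{A}^c_{k,\rho}(s)}\big)$. *)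

theory Defs
  imports "HOL-Probability.Probability"
begin

definition M_fun :: "real \<Rightarrow> nat" where
  "M_fun s = nat \<lfloor>1 / s\<rfloor>"

definition c_alpha :: "real \<Rightarrow> real" where
  "c_alpha \<alpha> = Gamma (1 + 2 * \<alpha>) / 2 powr (2 * \<alpha>)"

definition f_alpha :: "real \<Rightarrow> real \<Rightarrow> real" where
  "f_alpha \<alpha> s = sqrt (s powr (1 + 2 * \<alpha>) / (c_alpha \<alpha> * ln (ln (1 / s))))"

text \<open>Threshold of the event A_{k,rho}(s): A = {|eta_k| > thr}.\<close>
definition thr :: "real \<Rightarrow> nat \<Rightarrow> real \<Rightarrow> real \<Rightarrow> real" where
  "thr \<alpha> k \<rho> s = \<rho> / ((ln (real k)) powr \<alpha> * ln (1 / s))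
      * sqrt (real k powr (1 + s) / (s powr (1 + 2 * \<alpha>) * ln (ln (1 / s))))"

definition eta_trunc :: "(nat \<Rightarrow> 'a \<Rightarrow> real) \<Rightarrow> real \<Rightarrow> nat \<Rightarrow> real \<Rightarrow> real \<Rightarrow> 'a \<Rightarrow> real" where
  "eta_trunc \<eta> \<alpha> k \<rho> s \<omega> = (if \<bar>\<eta> k \<omega>\<bar> \<le> thr \<alpha> k \<rho> s then \<eta> k \<omega> else 0)"

definition eta_tilde :: "'a measure \<Rightarrow> (nat \<Rightarrow> 'a \<Rightarrow> real) \<Rightarrow> real \<Rightarrow> nat \<Rightarrow> real \<Rightarrow> real \<Rightarrow> 'a \<Rightarrow> real" where
  "eta_tilde M \<eta> \<alpha> k \<rho> s \<omega> =
     eta_trunc \<eta> \<alpha> k \<rho> s \<omega> - integral\<^sup>L M (eta_trunc \<eta> \<alpha> k \<rho> s)"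

definition s_seq :: "real \<Rightarrow> nat \<Rightarrow> real" where
  "s_seq \<gamma> n = exp (- (real n powr (1 - \<gamma>)))"

text \<open>The j-th term (j = 0,1,...) of the series over k >= M(s)+1, k = j + M(s) + 1.\<close>
definition series_term :: "'a measure \<Rightarrow> (nat \<Rightarrow> 'a \<Rightarrow> real) \<Rightarrow> real \<Rightarrow> real \<Rightarrow> real \<Rightarrow> 'a \<Rightarrow> nat \<Rightarrow> real" where
  "series_term M \<eta> \<alpha> \<rho> s \<omega> j =
     (let k = j + M_fun s + 1 in
       (ln (real k)) powr \<alpha> * eta_tilde M \<eta> \<alpha> k \<rho> s \<omega> / real k powr (1/2 + s))"

end

theory Submission
  imports Defs
begin

lemma exp_quad_bound:
  fixes y D :: real
  assumes "\<bar>y\<bar> \<le> D"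
  shows "exp y \<le> 1 + y + y\<^sup>2 / 2 * exp D"
proof -
  obtain t where t: "\<bar>t\<bar> \<le> \<bar>y\<bar>" "exp y = (\<Sum>m<2. (y ^ m) / fact m) + (exp t / fact 2) * y ^ 2"
    using Maclaurin_exp_le[of y 2] by blast
  have "exp t \<le> exp D" using t(1) assms by simp
  then have "(exp t / fact 2) * y ^ 2 \<le> y\<^sup>2 / 2 * exp D"
    by (simp add: fact_numeral mult_right_mono algebra_simps)
  moreover have "(\<Sum>m<2. (y ^ m) / fact m) = 1 + y" by (simp add: numeral_2_eq_2)
  ultimately show ?thesis using t(2) by linarith
qed

lemma (in prob_space) exp_sum_tail:
  fixes X :: "nat \<Rightarrow> 'a \<Rightarrow> real" and I :: "nat set"
  assumes fin: "finite I" and ind: "indep_vars (\<lambda>_. borel) X I"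
    and bnd: "\<And>i \<omega>. i \<in> I \<Longrightarrow> \<omega> \<in> space M \<Longrightarrow> \<bar>X i \<omega>\<bar> \<le> B"
    and tB: "t * B \<le> D" and t: "t \<ge> 0"
    and mean: "\<And>i. i \<in> I \<Longrightarrow> expectation (X i) = 0"
  shows "prob {\<omega>\<in>space M. x < (\<Sum>i\<in>I. X i \<omega>)}
     \<le> exp (- t * x + t\<^sup>2 * exp D / 2 * (\<Sum>i\<in>I. expectation (\<lambda>\<omega>. (X i \<omega>)\<^sup>2)))"
proof -
  have rv: "X i \<in> borel_measurable M" if "i \<in> I" for i
    using ind that unfolding indep_vars_def by auto
  have intX: "integrable M (X i)" if "i \<in> I" for i
    using that bnd rv by (intro integrable_const_bound[where B=B]) auto
  have intX2: "integrable M (\<lambda>\<omega>. (X i \<omega>)\<^sup>2)" if "i \<in> I" for i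
  proof (intro integrable_const_bound[where B="B\<^sup>2"] AE_I2)
    fix \<omega> assume "\<omega> \<in> space M"
    then have "\<bar>X i \<omega>\<bar> \<le> \<bar>B\<bar>" using bnd[OF that] by (force intro: order.trans[OF _ abs_ge_self])
    then show "norm ((X i \<omega>)\<^sup>2) \<le> B\<^sup>2" by (simp add: abs_le_square_iff[symmetric])
  qed (use rv that in auto)
  define Y where "Y i \<omega> = exp (t * X i \<omega>)" for i \<omega>
  have indY: "indep_vars (\<lambda>_. borel) Y I"
    unfolding Y_def by (rule indep_vars_compose2[OF ind]) auto
  have intY: "integrable M (Y i)" if "i \<in> I" for i
    unfolding Y_def using that bnd rv
  proof (intro integrable_const_bound[where B="exp (t * B)"] AE_I2)
    fix \<omega> assume "\<omega> \<in> space M"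
    then have "X i \<omega> \<le> B" using bnd[OF that] by force
    then show "norm (exp (t * X i \<omega>)) \<le> exp (t * B)" using t by (simp add: mult_left_mono)
  qed (use rv that in auto)
  have EY: "expectation (Y i) \<le> exp (t\<^sup>2 * exp D / 2 * expectation (\<lambda>\<omega>. (X i \<omega>)\<^sup>2))" if i: "i \<in> I" for i
  proof -
    have "expectation (Y i) \<le> expectation (\<lambda>\<omega>. 1 + t * X i \<omega> + (t\<^sup>2 * exp D / 2) * (X i \<omega>)\<^sup>2)"
    proof (rule integral_mono[OF intY[OF i]])
      show "integrable M (\<lambda>\<omega>. 1 + t * X i \<omega> + (t\<^sup>2 * exp D / 2) * (X i \<omega>)\<^sup>2)"
        using intX[OF i] intX2[OF i] by auto
      fix \<omega> assume "\<omega> \<in> space M"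
      then have "\<bar>t * X i \<omega>\<bar> \<le> D"
        using bnd[OF i] t tB by (auto simp: abs_mult intro: order.trans[OF mult_left_mono])
      from exp_quad_bound[OF this] show "Y i \<omega> \<le> 1 + t * X i \<omega> + (t\<^sup>2 * exp D / 2) * (X i \<omega>)\<^sup>2"
        unfolding Y_def by (simp add: power_mult_distrib mult_ac)
    qed
    also have "\<dots> = 1 + t\<^sup>2 * exp D / 2 * expectation (\<lambda>\<omega>. (X i \<omega>)\<^sup>2)"
      using intX[OF i] intX2[OF i] mean[OF i] by (simp add: prob_space)
    also have "\<dots> \<le> exp (t\<^sup>2 * exp D / 2 * expectation (\<lambda>\<omega>. (X i \<omega>)\<^sup>2))"
      by (rule exp_ge_add_one_self)
    finally show ?thesis .
  qed
  have "expectation (\<lambda>\<omega>. \<Prod>i\<in>I. Y i \<omega>) = (\<Prod>i\<in>I. expectation (Y i))"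
    by (rule indep_vars_lebesgue_integral[OF fin indY intY])
  also have "\<dots> \<le> (\<Prod>i\<in>I. exp (t\<^sup>2 * exp D / 2 * expectation (\<lambda>\<omega>. (X i \<omega>)\<^sup>2)))"
    by (intro prod_mono conjI EY) (auto simp: Y_def intro!: integral_nonneg_AE)
  also have "\<dots> = exp (t\<^sup>2 * exp D / 2 * (\<Sum>i\<in>I. expectation (\<lambda>\<omega>. (X i \<omega>)\<^sup>2)))"
    by (simp add: exp_sum[OF fin] sum_distrib_left)
  finally have Eprod: "expectation (\<lambda>\<omega>. \<Prod>i\<in>I. Y i \<omega>) \<le> exp (t\<^sup>2 * exp D / 2 * (\<Sum>i\<in>I. expectation (\<lambda>\<omega>. (X i \<omega>)\<^sup>2)))" .
  have prodY: "(\<Prod>i\<in>I. Y i \<omega>) = exp (t * (\<Sum>i\<in>I. X i \<omega>))" for \<omega>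
    unfolding Y_def by (simp add: exp_sum[OF fin] sum_distrib_left)
  have intP: "integrable M (\<lambda>\<omega>. \<Prod>i\<in>I. Y i \<omega>)"
    by (rule indep_vars_integrable[OF fin indY intY])
  have Smeas: "(\<lambda>\<omega>. \<Sum>i\<in>I. X i \<omega>) \<in> borel_measurable M" using rv by auto
  have "prob {\<omega>\<in>space M. x < (\<Sum>i\<in>I. X i \<omega>)} = expectation (indicator {\<omega>\<in>space M. x < (\<Sum>i\<in>I. X i \<omega>)})"
    by (simp add: Int_absorb2 Collect_conj_eq[symmetric] Int_def conj_commute cong: conj_cong)
  also have "\<dots> \<le> expectation (\<lambda>\<omega>. exp (- t * x) * (\<Prod>i\<in>I. Y i \<omega>))"
  proof (rule integral_mono)
    show "integrable M (indicator {\<omega> \<in> space M. x < (\<Sum>i\<in>I. X i \<omega>)} :: 'a \<Rightarrow> real)"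
      using Smeas by (intro integrable_const_bound[where B=1]) (auto simp: indicator_def)
    show "integrable M (\<lambda>\<omega>. exp (- t * x) * (\<Prod>i\<in>I. Y i \<omega>))" using intP by auto
    fix \<omega> assume "\<omega> \<in> space M"
    show "indicator {\<omega> \<in> space M. x < (\<Sum>i\<in>I. X i \<omega>)} \<omega> \<le> exp (- t * x) * (\<Prod>i\<in>I. Y i \<omega>)"
    proof (cases "x < (\<Sum>i\<in>I. X i \<omega>)")
      case True
      then have "0 \<le> t * (\<Sum>i\<in>I. X i \<omega>) - t * x" using t by (simp add: right_diff_distrib[symmetric])
      then have "1 \<le> exp (- t * x) * exp (t * (\<Sum>i\<in>I. X i \<omega>))"
        by (simp add: exp_add[symmetric])
      then show ?thesis using True \<open>\<omega> \<in> space M\<close> by (simp add: prodY indicator_def)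
    next
      case False
      then show ?thesis by (simp add: prodY indicator_def)
    qed
  qed
  also have "\<dots> = exp (- t * x) * expectation (\<lambda>\<omega>. \<Prod>i\<in>I. Y i \<omega>)" by simp
  also have "\<dots> \<le> exp (- t * x) * exp (t\<^sup>2 * exp D / 2 * (\<Sum>i\<in>I. expectation (\<lambda>\<omega>. (X i \<omega>)\<^sup>2)))"
    using Eprod by simp
  also have "\<dots> = exp (- t * x + t\<^sup>2 * exp D / 2 * (\<Sum>i\<in>I. expectation (\<lambda>\<omega>. (X i \<omega>)\<^sup>2)))"
    by (simp only: exp_add[symmetric])
  finally show ?thesis .
qed


lemma (in prob_space) sum_sq_expect:
  fixes X :: "nat \<Rightarrow> 'a \<Rightarrow> real"
  assumes fin: "finite I" and ind: "indep_vars (\<lambda>_. borel) X I"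
    and bnd: "\<And>i \<omega>. i \<in> I \<Longrightarrow> \<omega> \<in> space M \<Longrightarrow> \<bar>X i \<omega>\<bar> \<le> B"
    and mean: "\<And>i. i \<in> I \<Longrightarrow> expectation (X i) = 0"
  shows "expectation (\<lambda>\<omega>. (\<Sum>i\<in>I. X i \<omega>)\<^sup>2) = (\<Sum>i\<in>I. expectation (\<lambda>\<omega>. (X i \<omega>)\<^sup>2))"
proof -
  have rv: "X i \<in> borel_measurable M" if "i \<in> I" for i
    using ind that unfolding indep_vars_def by auto
  have intX: "integrable M (X i)" if "i \<in> I" for i
    using that bnd rv by (intro integrable_const_bound[where B=B]) auto
  have intXX: "integrable M (\<lambda>\<omega>. X i \<omega> * X j \<omega>)" if "i \<in> I" "j \<in> I" for i j
  proof (intro integrable_const_bound[where B="B * B"] AE_I2)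
    fix \<omega> assume "\<omega> \<in> space M"
    then show "norm (X i \<omega> * X j \<omega>) \<le> B * B"
      using bnd[OF that(1)] bnd[OF that(2)] by (simp add: abs_mult mult_mono')
  qed (use rv that in auto)
  have cross: "expectation (\<lambda>\<omega>. X i \<omega> * X j \<omega>) = 0" if "i \<in> I" "j \<in> I" "i \<noteq> j" for i j
  proof -
    have "indep_vars (\<lambda>_. borel) X {i, j}" using ind that by (auto intro: indep_vars_subset)
    from indep_vars_lebesgue_integral[OF _ this] that intX
    have "expectation (\<lambda>\<omega>. \<Prod>l\<in>{i,j}. X l \<omega>) = (\<Prod>l\<in>{i,j}. expectation (X l))" by auto
    then show ?thesis using that mean by simp
  qed
  have "expectation (\<lambda>\<omega>. (\<Sum>i\<in>I. X i \<omega>)\<^sup>2) = expectation (\<lambda>\<omega>. \<Sum>i\<in>I. \<Sum>j\<in>I. X i \<omega> * X j \<omega>)"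
    by (simp add: power2_eq_square sum_product)
  also have "\<dots> = (\<Sum>i\<in>I. \<Sum>j\<in>I. expectation (\<lambda>\<omega>. X i \<omega> * X j \<omega>))"
    using intXX by (simp add: Bochner_Integration.integral_sum Bochner_Integration.integrable_sum)
  also have "\<dots> = (\<Sum>i\<in>I. expectation (\<lambda>\<omega>. X i \<omega> * X i \<omega>))"
  proof (rule sum.cong[OF refl])
    fix i assume i: "i \<in> I"
    have "(\<Sum>j\<in>I. expectation (\<lambda>\<omega>. X i \<omega> * X j \<omega>)) = (\<Sum>j\<in>{i}. expectation (\<lambda>\<omega>. X i \<omega> * X j \<omega>))"
      using i fin cross by (intro sum.mono_neutral_right) auto
    then show "(\<Sum>j\<in>I. expectation (\<lambda>\<omega>. X i \<omega> * X j \<omega>)) = expectation (\<lambda>\<omega>. X i \<omega> * X i \<omega>)" by simp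
  qed
  finally show ?thesis by (simp add: power2_eq_square)
qed

lemma (in prob_space) kolmogorov_max:
  fixes X :: "nat \<Rightarrow> 'a \<Rightarrow> real"
  assumes ind: "indep_vars (\<lambda>_. borel) X {..<n}"
    and bnd: "\<And>i \<omega>. i < n \<Longrightarrow> \<omega> \<in> space M \<Longrightarrow> \<bar>X i \<omega>\<bar> \<le> B"
    and mean: "\<And>i. i < n \<Longrightarrow> expectation (X i) = 0"
    and eps: "\<epsilon> > 0"
  shows "prob {\<omega>\<in>space M. \<exists>k\<le>n. \<epsilon> \<le> \<bar>\<Sum>i<k. X i \<omega>\<bar>}
     \<le> (\<Sum>i<n. expectation (\<lambda>\<omega>. (X i \<omega>)\<^sup>2)) / \<epsilon>\<^sup>2"
proof -
  have rv[measurable]: "X i \<in> borel_measurable M" if "i < n" for i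
    using ind that unfolding indep_vars_def by auto
  define S where "S k \<omega> = (\<Sum>i<k. X i \<omega>)" for k \<omega>
  define P where "P k \<omega> = (\<epsilon> \<le> \<bar>S k \<omega>\<bar> \<and> (\<forall>j\<in>{..<k}. \<bar>S j \<omega>\<bar> < \<epsilon>))" for k \<omega>
  define A where "A k = {\<omega>\<in>space M. P k \<omega>}" for k
  have Smeas[measurable]: "S k \<in> borel_measurable M" if "k \<le> n" for k
    unfolding S_def using that by (intro borel_measurable_sum) auto
  have Pmeas: "Measurable.pred M (P k)" if "k \<le> n" for k
    unfolding P_def using that by (intro pred_intros_logic pred_intros_finite) auto
  have Asets: "A k \<in> sets M" if "k \<le> n" for k
    unfolding A_def using Pmeas[OF that] by (simp add: pred_def)
  have Sbnd: "\<bar>S k \<omega>\<bar> \<le> real k * \<bar>B\<bar>" if "k \<le> n" "\<omega> \<in> space M" for k \<omega>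
  proof -
    have "\<bar>S k \<omega>\<bar> \<le> (\<Sum>i<k. \<bar>X i \<omega>\<bar>)" unfolding S_def by (rule sum_abs)
    also have "\<dots> \<le> (\<Sum>i<k. \<bar>B\<bar>)" using that bnd by (intro sum_mono) (force intro: order.trans[OF _ abs_ge_self])
    finally show ?thesis by simp
  qed
  have intS2: "integrable M (\<lambda>\<omega>. (S k \<omega>)\<^sup>2 * indicator (A j) \<omega>)" if "k \<le> n" "j \<le> n" for k j
  proof (intro integrable_const_bound[where B="(real k * \<bar>B\<bar>)\<^sup>2"] AE_I2)
    fix \<omega> assume w: "\<omega> \<in> space M"
    have "(S k \<omega>)\<^sup>2 \<le> (real k * \<bar>B\<bar>)\<^sup>2" using power_mono[OF Sbnd[OF that(1) w] abs_ge_zero, of 2] by simp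
    then show "norm ((S k \<omega>)\<^sup>2 * indicator (A j) \<omega>) \<le> (real k * \<bar>B\<bar>)\<^sup>2"
      by (auto simp: indicator_def)
  qed (use that Asets in auto)
  have key: "\<epsilon>\<^sup>2 * prob (A k) \<le> expectation (\<lambda>\<omega>. (S n \<omega>)\<^sup>2 * indicator (A k) \<omega>)" if k: "k \<le> n" for k
  proof -
    define U where "U \<omega> = S k \<omega> * (if P k \<omega> then 1 else (0::real))" for \<omega>
    define R where "R \<omega> = (\<Sum>i\<in>{k..<n}. X i \<omega>)" for \<omega>
    have SnR: "S n \<omega> = S k \<omega> + R \<omega>" for \<omega>
      unfolding S_def R_def using k
      by (metis atLeast0LessThan sum.atLeastLessThan_concat zero_le)
    define F where "F f = (\<Sum>i<k. f i) * (if (\<epsilon> \<le> \<bar>\<Sum>i<k. f i\<bar> \<and> (\<forall>j\<in>{..<k}. \<bar>\<Sum>i<j. f i\<bar> < \<epsilon>)) then 1 else (0::real))"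
      for f :: "nat \<Rightarrow> real"
    define G where "G f = (\<Sum>i\<in>{k..<n}. f i)" for f :: "nat \<Rightarrow> real"
    have Fm: "F \<in> borel_measurable (PiM {..<k} (\<lambda>_. borel))"
      unfolding F_def by measurable
    have Gm: "G \<in> borel_measurable (PiM {k..<n} (\<lambda>_. borel))"
      unfolding G_def by measurable
    have "indep_var borel (F \<circ> (\<lambda>\<omega>. restrict (\<lambda>i. X i \<omega>) {..<k})) borel (G \<circ> (\<lambda>\<omega>. restrict (\<lambda>i. X i \<omega>) {k..<n}))"
      using k by (intro indep_var_compose[OF indep_var_restrict[OF ind] Fm Gm]) auto
    moreover have "F \<circ> (\<lambda>\<omega>. restrict (\<lambda>i. X i \<omega>) {..<k}) = U"
    proof
      fix \<omega>
      have e: "(\<Sum>i<j. restrict (\<lambda>i. X i \<omega>) {..<k} i) = S j \<omega>" if "j \<le> k" for j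
        unfolding S_def using that by (intro sum.cong) auto
      have "(\<epsilon> \<le> \<bar>\<Sum>i<k. restrict (\<lambda>i. X i \<omega>) {..<k} i\<bar> \<and>
           (\<forall>j\<in>{..<k}. \<bar>\<Sum>i<j. restrict (\<lambda>i. X i \<omega>) {..<k} i\<bar> < \<epsilon>)) = P k \<omega>"
        unfolding P_def using e by (simp del: restrict_apply)
      then show "(F \<circ> (\<lambda>\<omega>. restrict (\<lambda>i. X i \<omega>) {..<k})) \<omega> = U \<omega>"
        unfolding F_def U_def using e[of k] by (simp del: restrict_apply)
    qed
    moreover have "G \<circ> (\<lambda>\<omega>. restrict (\<lambda>i. X i \<omega>) {k..<n}) = R"
      unfolding G_def R_def by (auto simp: fun_eq_iff intro!: sum.cong)
    ultimately have indUR: "indep_var borel U borel R" by simp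
    have indA: "indicator (A k) \<omega> = (if P k \<omega> then 1 else (0::real))" if "\<omega> \<in> space M" for \<omega>
      using that unfolding A_def by (auto simp: indicator_def)
    have Um: "U \<in> borel_measurable M"
    proof -
      have m: "(\<lambda>\<omega>. S k \<omega> * indicator (A k) \<omega>) \<in> borel_measurable M"
        using Asets[OF k] Smeas[OF k] by measurable
      have eq: "\<And>\<omega>. \<omega> \<in> space M \<Longrightarrow> U \<omega> = S k \<omega> * indicator (A k) \<omega>"
        using indA unfolding U_def by simp
      show ?thesis using measurable_cong[where M=M and f=U and g="\<lambda>\<omega>. S k \<omega> * indicator (A k) \<omega>" and M'=borel] eq m by blast
    qed
    have intU: "integrable M U"
    proof (intro integrable_const_bound[where B="real k * \<bar>B\<bar>"] AE_I2 Um)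
      fix \<omega> assume w: "\<omega> \<in> space M"
      show "norm (U \<omega>) \<le> real k * \<bar>B\<bar>" using Sbnd[OF k w] unfolding U_def by auto
    qed
    have intXi: "integrable M (X i)" if "i < n" for i
      using that bnd rv by (intro integrable_const_bound[where B=B]) auto
    have intR: "integrable M R" unfolding R_def using intXi by auto
    have ER: "expectation R = 0" unfolding R_def using mean intXi
      by (subst Bochner_Integration.integral_sum) auto
    have intUR: "integrable M (\<lambda>\<omega>. U \<omega> * R \<omega>)"
      by (rule indep_var_integrable[OF indUR intU intR])
    have EUR: "expectation (\<lambda>\<omega>. U \<omega> * R \<omega>) = 0"
      using indep_var_lebesgue_integral[OF indUR intU intR] ER by simp
    have intI: "integrable M (\<lambda>\<omega>. \<epsilon>\<^sup>2 * indicator (A k) \<omega>)"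
      using Asets[OF k] by (intro integrable_mult_right integrable_real_indicator) (auto simp: less_top[symmetric])
    have "\<epsilon>\<^sup>2 * prob (A k) = expectation (\<lambda>\<omega>. \<epsilon>\<^sup>2 * indicator (A k) \<omega>)"
      using Asets[OF k] sets.sets_into_space[OF Asets[OF k]] by (simp add: Int_absorb2)
    also have "\<dots> \<le> expectation (\<lambda>\<omega>. (S k \<omega>)\<^sup>2 * indicator (A k) \<omega>)"
    proof (rule integral_mono[OF intI intS2[OF k k]])
      fix \<omega> assume w: "\<omega> \<in> space M"
      show "\<epsilon>\<^sup>2 * indicator (A k) \<omega> \<le> (S k \<omega>)\<^sup>2 * indicator (A k) \<omega>"
      proof (cases "\<omega> \<in> A k")
        case True
        then have "\<epsilon> \<le> \<bar>S k \<omega>\<bar>" unfolding A_def P_def by auto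
        then have "\<epsilon>\<^sup>2 \<le> (S k \<omega>)\<^sup>2" using eps power_mono[of \<epsilon> "\<bar>S k \<omega>\<bar>" 2] by simp
        then show ?thesis using True by simp
      qed simp
    qed
    also have "\<dots> = expectation (\<lambda>\<omega>. (S k \<omega>)\<^sup>2 * indicator (A k) \<omega> + 2 * (U \<omega> * R \<omega>))"
      using intS2[OF k k] intUR EUR by simp
    also have "\<dots> \<le> expectation (\<lambda>\<omega>. (S n \<omega>)\<^sup>2 * indicator (A k) \<omega>)"
    proof (rule integral_mono)
      show "integrable M (\<lambda>\<omega>. (S k \<omega>)\<^sup>2 * indicator (A k) \<omega> + 2 * (U \<omega> * R \<omega>))"
        using intS2[OF k k] intUR by simp
      show "integrable M (\<lambda>\<omega>. (S n \<omega>)\<^sup>2 * indicator (A k) \<omega>)" using intS2 k by simp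
      fix \<omega> assume w: "\<omega> \<in> space M"
      have "(S k \<omega>)\<^sup>2 * indicator (A k) \<omega> + 2 * (U \<omega> * R \<omega>)
          = ((S k \<omega>)\<^sup>2 + 2 * S k \<omega> * R \<omega>) * indicator (A k) \<omega>"
        using indA[OF w] unfolding U_def by (simp add: algebra_simps)
      also have "\<dots> \<le> (S n \<omega>)\<^sup>2 * indicator (A k) \<omega>"
        unfolding SnR by (intro mult_right_mono) (auto simp: power2_eq_square algebra_simps)
      finally show "(S k \<omega>)\<^sup>2 * indicator (A k) \<omega> + 2 * (U \<omega> * R \<omega>) \<le> (S n \<omega>)\<^sup>2 * indicator (A k) \<omega>" .
    qed
    finally show ?thesis .
  qed
  have disj: "disjoint_family_on A {..n}"
    unfolding disjoint_family_on_def A_def P_def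
  proof (intro ballI impI)
    fix m j :: nat assume "m \<noteq> j"
    then have "m < j \<or> j < m" by auto
    then show "{\<omega> \<in> space M. \<epsilon> \<le> \<bar>S m \<omega>\<bar> \<and> (\<forall>j\<in>{..<m}. \<bar>S j \<omega>\<bar> < \<epsilon>)} \<inter>
           {\<omega> \<in> space M. \<epsilon> \<le> \<bar>S j \<omega>\<bar> \<and> (\<forall>i\<in>{..<j}. \<bar>S i \<omega>\<bar> < \<epsilon>)} = {}"
      by (auto simp: not_less[symmetric])
  qed
  have Eeq: "{\<omega>\<in>space M. \<exists>k\<le>n. \<epsilon> \<le> \<bar>\<Sum>i<k. X i \<omega>\<bar>} = (\<Union>k\<in>{..n}. A k)"
  proof (rule set_eqI, rule iffI)
    fix \<omega> assume "\<omega> \<in> {\<omega>\<in>space M. \<exists>k\<le>n. \<epsilon> \<le> \<bar>\<Sum>i<k. X i \<omega>\<bar>}"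
    then obtain k where w: "\<omega> \<in> space M" and k: "k \<le> n" "\<epsilon> \<le> \<bar>S k \<omega>\<bar>" unfolding S_def by auto
    define k0 where "k0 = (LEAST k. \<epsilon> \<le> \<bar>S k \<omega>\<bar>)"
    have k0: "\<epsilon> \<le> \<bar>S k0 \<omega>\<bar>" "k0 \<le> k" unfolding k0_def using k by (auto intro: LeastI Least_le)
    have "\<forall>j\<in>{..<k0}. \<bar>S j \<omega>\<bar> < \<epsilon>" unfolding k0_def using not_less_Least by fastforce
    then show "\<omega> \<in> (\<Union>k\<in>{..n}. A k)" using k0 k w unfolding A_def P_def by auto
  qed (auto simp: A_def P_def S_def)
  have sum1: "(\<Sum>k\<le>n. indicator (A k) \<omega>) \<le> (1::real)" for \<omega>
  proof (cases "\<exists>k\<le>n. \<omega> \<in> A k")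
    case True
    then obtain k where k: "k \<le> n" "\<omega> \<in> A k" by auto
    have "(\<Sum>k\<le>n. indicator (A k) \<omega>) = (\<Sum>j\<in>{k}. indicator (A j) \<omega> :: real)"
    proof (intro sum.mono_neutral_right)
      show "\<forall>i\<in>{..n} - {k}. indicator (A i) \<omega> = (0::real)"
        using disj k unfolding disjoint_family_on_def by (auto simp: indicator_def)
    qed (use k in auto)
    then show ?thesis by simp
  next
    case False
    then show ?thesis by (simp add: indicator_def)
  qed
  have "\<epsilon>\<^sup>2 * prob {\<omega>\<in>space M. \<exists>k\<le>n. \<epsilon> \<le> \<bar>\<Sum>i<k. X i \<omega>\<bar>} = (\<Sum>k\<le>n. \<epsilon>\<^sup>2 * prob (A k))"
    unfolding Eeq using Asets disj by (subst finite_measure_finite_Union) (auto simp: sum_distrib_left)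
  also have "\<dots> \<le> (\<Sum>k\<le>n. expectation (\<lambda>\<omega>. (S n \<omega>)\<^sup>2 * indicator (A k) \<omega>))"
    by (intro sum_mono key) auto
  also have "\<dots> = expectation (\<lambda>\<omega>. (S n \<omega>)\<^sup>2 * (\<Sum>k\<le>n. indicator (A k) \<omega>))"
    using intS2 by (subst Bochner_Integration.integral_sum[symmetric]) (auto simp: sum_distrib_left)
  also have "\<dots> \<le> expectation (\<lambda>\<omega>. (S n \<omega>)\<^sup>2)"
  proof (rule integral_mono)
    show "integrable M (\<lambda>\<omega>. (S n \<omega>)\<^sup>2 * (\<Sum>k\<le>n. indicator (A k) \<omega>))"
    proof -
      have "integrable M (\<lambda>\<omega>. \<Sum>k\<le>n. (S n \<omega>)\<^sup>2 * indicator (A k) \<omega>)"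
        using intS2 by (intro Bochner_Integration.integrable_sum) auto
      then show ?thesis by (simp only: sum_distrib_left)
    qed
    show "integrable M (\<lambda>\<omega>. (S n \<omega>)\<^sup>2)"
    proof (intro integrable_const_bound[where B="(real n * \<bar>B\<bar>)\<^sup>2"] AE_I2)
      fix \<omega> assume w: "\<omega> \<in> space M"
      show "norm ((S n \<omega>)\<^sup>2) \<le> (real n * \<bar>B\<bar>)\<^sup>2"
        using power_mono[OF Sbnd[OF _ w, of n] abs_ge_zero, of 2] by simp
    qed simp
    fix \<omega> show "(S n \<omega>)\<^sup>2 * (\<Sum>k\<le>n. indicator (A k) \<omega>) \<le> (S n \<omega>)\<^sup>2"
      using mult_left_mono[OF sum1[of \<omega>], of "(S n \<omega>)\<^sup>2"] by simp
  qed
  also have "\<dots> = (\<Sum>i<n. expectation (\<lambda>\<omega>. (X i \<omega>)\<^sup>2))"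
    unfolding S_def by (rule sum_sq_expect[OF _ ind]) (use bnd mean in auto)
  finally have "\<epsilon>\<^sup>2 * prob {\<omega>\<in>space M. \<exists>k\<le>n. \<epsilon> \<le> \<bar>\<Sum>i<k. X i \<omega>\<bar>} \<le> (\<Sum>i<n. expectation (\<lambda>\<omega>. (X i \<omega>)\<^sup>2))" .
  then show ?thesis using eps by (simp add: field_simps)
qed


lemma (in prob_space) indep_sets_reindex:
  assumes inj: "inj_on f I" and ind: "indep_sets F (f ` I)"
  shows "indep_sets (\<lambda>i. F (f i)) I"
  unfolding indep_sets_def
proof (intro conjI allI impI ballI)
  fix i assume "i \<in> I" then show "F (f i) \<subseteq> events" using ind unfolding indep_sets_def by auto
next
  fix J A assume J: "J \<subseteq> I" "J \<noteq> {}" "finite J" and A: "A \<in> Pi J (\<lambda>i. F (f i))"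
  define A' where "A' j' = A (the_inv_into J f j')" for j'
  have injJ: "inj_on f J" using inj J(1) by (rule inj_on_subset)
  have A'f: "A' (f j) = A j" if "j \<in> J" for j
    unfolding A'_def using the_inv_into_f_f[OF injJ that] by simp
  have "A' \<in> Pi (f ` J) F" using A A'f by auto
  then have "prob (\<Inter>j\<in>f ` J. A' j) = (\<Prod>j\<in>f ` J. prob (A' j))"
    using ind J unfolding indep_sets_def by (metis finite_imageI image_is_empty image_mono)
  moreover have "(\<Inter>j\<in>f ` J. A' j) = (\<Inter>j\<in>J. A j)" using A'f by auto
  moreover have "(\<Prod>j\<in>f ` J. prob (A' j)) = (\<Prod>j\<in>J. prob (A j))"
    using A'f by (simp add: prod.reindex[OF injJ])
  ultimately show "prob (\<Inter>j\<in>J. A j) = (\<Prod>j\<in>J. prob (A j))" by simp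
qed

lemma (in prob_space) indep_vars_reindex:
  assumes inj: "inj_on f I" and ind: "indep_vars M' X (f ` I)"
  shows "indep_vars (\<lambda>i. M' (f i)) (\<lambda>i. X (f i)) I"
  using ind indep_sets_reindex[OF inj, of "\<lambda>i. sigma_sets (space M) { X i -` A \<inter> space M | A. A \<in> sets (M' i)}"]
  unfolding indep_vars_def by auto


lemma cauchy_from_tails:
  fixes x :: "nat \<Rightarrow> real"
  assumes H: "\<forall>j::nat. \<exists>m. \<forall>k. \<bar>\<Sum>i<k. x (i + m)\<bar> < 1 / (Suc j)"
  shows "summable x"
proof -
  have "Cauchy (\<lambda>n. \<Sum>i<n. x i)"
  proof (rule metric_CauchyI)
    fix e :: real assume e: "e > 0"
    obtain j :: nat where j: "2 / e < real j" using reals_Archimedean2 by blast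
    obtain m where m: "\<And>k. \<bar>\<Sum>i<k. x (i + m)\<bar> < 1 / Suc j" using H by blast
    have split: "(\<Sum>i<n. x i) = (\<Sum>i<m. x i) + (\<Sum>i<n - m. x (i + m))" if "n \<ge> m" for n
    proof -
      have "(\<Sum>i<n. x i) = (\<Sum>i<m. x i) + (\<Sum>i\<in>{m..<n}. x i)"
        using that by (metis atLeast0LessThan sum.atLeastLessThan_concat zero_le)
      also have "(\<Sum>i\<in>{m..<n}. x i) = (\<Sum>i<n - m. x (i + m))"
      proof -
        have "{m..<n} = (\<lambda>i. i + m) ` {..<n - m}" using that
        proof (auto simp: image_iff)
          fix i assume "m \<le> i" "i < n" then show "\<exists>xa\<in>{..<n - m}. i = xa + m"
            by (intro bexI[of _ "i - m"]) auto
        qed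
        then show ?thesis by (simp add: sum.reindex inj_on_def)
      qed
      finally show ?thesis .
    qed
    have "2 / Suc j < e"
    proof -
      have "2 < e * j" using j e by (simp add: field_simps)
      also have "\<dots> \<le> e * Suc j" using e by simp
      finally show ?thesis by (simp add: field_simps)
    qed
    show "\<exists>M. \<forall>ma\<ge>M. \<forall>n\<ge>M. dist (\<Sum>i<ma. x i) (\<Sum>i<n. x i) < e"
    proof (intro exI allI impI)
      fix a b assume ab: "m \<le> a" "m \<le> b"
      have "dist (\<Sum>i<a. x i) (\<Sum>i<b. x i) = \<bar>(\<Sum>i<a - m. x (i + m)) - (\<Sum>i<b - m. x (i + m))\<bar>"
        unfolding dist_real_def split[OF ab(1)] split[OF ab(2)] by simp
      also have "\<dots> \<le> \<bar>\<Sum>i<a - m. x (i + m)\<bar> + \<bar>\<Sum>i<b - m. x (i + m)\<bar>" by (rule abs_triangle_ineq4)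
      also have "\<dots> < 1 / Suc j + 1 / Suc j" using m[of "a - m"] m[of "b - m"] by (rule add_strict_mono)
      also have "\<dots> = 2 / Suc j" by simp
      finally show "dist (\<Sum>i<a. x i) (\<Sum>i<b. x i) < e" using \<open>2 / Suc j < e\<close> by simp
    qed
  qed
  then show ?thesis by (simp add: summable_iff_convergent Cauchy_convergent_iff)
qed

lemma (in prob_space) kolmogorov_as:
  fixes X :: "nat \<Rightarrow> 'a \<Rightarrow> real"
  assumes ind: "indep_vars (\<lambda>_. borel) X UNIV"
    and bnd: "\<And>i \<omega>. \<omega> \<in> space M \<Longrightarrow> \<bar>X i \<omega>\<bar> \<le> B i"
    and mean: "\<And>i. expectation (X i) = 0"
    and summ: "summable (\<lambda>i. expectation (\<lambda>\<omega>. (X i \<omega>)\<^sup>2))"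
  shows "AE \<omega> in M. summable (\<lambda>i. X i \<omega>)"
proof -
  have rv[measurable]: "X i \<in> borel_measurable M" for i
    using ind unfolding indep_vars_def by auto
  define v where "v i = expectation (\<lambda>\<omega>. (X i \<omega>)\<^sup>2)" for i
  define T where "T m = (\<Sum>i. v (i + m))" for m
  have T0: "T \<longlonglongrightarrow> 0" unfolding T_def v_def by (rule suminf_exist_split2[OF summ])
  have vnn: "0 \<le> v i" for i unfolding v_def by (rule integral_nonneg_AE) auto
  define D where "D \<epsilon> m = {\<omega>\<in>space M. \<exists>k. \<epsilon> \<le> \<bar>\<Sum>i<k. X (i + m) \<omega>\<bar>}" for \<epsilon> :: real and m
  have Dbound: "prob (D \<epsilon> m) \<le> T m / \<epsilon>\<^sup>2" if eps: "\<epsilon> > 0" for \<epsilon> m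
  proof -
    define E where "E n = {\<omega>\<in>space M. \<exists>k\<le>n. \<epsilon> \<le> \<bar>\<Sum>i<k. X (i + m) \<omega>\<bar>}" for n
    have Esets: "E n \<in> sets M" for n unfolding E_def by measurable
    have Einc: "incseq E" unfolding E_def incseq_def by (auto intro: le_trans)
    have DE: "D \<epsilon> m = (\<Union>n. E n)" unfolding D_def E_def by auto
    have Eb: "prob (E n) \<le> T m / \<epsilon>\<^sup>2" for n
    proof -
      have indY: "indep_vars (\<lambda>_. borel) (\<lambda>i. X (i + m)) {..<n}"
      proof -
        have "indep_vars (\<lambda>_. borel) X ((\<lambda>i. i + m) ` {..<n})"
          by (rule indep_vars_subset[OF ind]) auto
        from indep_vars_reindex[OF _ this] show ?thesis by (simp add: inj_on_def)
      qed
      have "prob (E n) \<le> (\<Sum>i<n. expectation (\<lambda>\<omega>. (X (i + m) \<omega>)\<^sup>2)) / \<epsilon>\<^sup>2"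
        unfolding E_def
      proof (rule kolmogorov_max[OF indY _ mean eps])
        fix i \<omega> assume "i < n" "\<omega> \<in> space M"
        then show "\<bar>X (i + m) \<omega>\<bar> \<le> (\<Sum>j<n. \<bar>B (j + m)\<bar>)"
          using bnd[of \<omega> "i + m"] by (intro order.trans[OF _ member_le_sum[of i]]) auto
      qed
      also have "\<dots> \<le> T m / \<epsilon>\<^sup>2"
        unfolding T_def v_def[symmetric] using eps
        by (intro divide_right_mono sum_le_suminf summable_ignore_initial_segment[OF summ[folded v_def]])
          (auto simp: vnn)
      finally show ?thesis .
    qed
    have "(\<lambda>n. prob (E n)) \<longlonglongrightarrow> prob (\<Union>n. E n)"
      using Esets Einc by (intro Lim_measure_incseq) auto
    then show ?thesis unfolding DE using Eb by (intro LIMSEQ_le_const2) auto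
  qed
  have AEeps: "AE \<omega> in M. \<exists>m. \<forall>k. \<bar>\<Sum>i<k. X (i + m) \<omega>\<bar> < \<epsilon>" if eps: "\<epsilon> > 0" for \<epsilon>
  proof -
    define G where "G = {\<omega>\<in>space M. \<forall>m. \<exists>k. \<epsilon> \<le> \<bar>\<Sum>i<k. X (i + m) \<omega>\<bar>}"
    have Gsets: "G \<in> sets M" unfolding G_def by measurable
    have "prob G \<le> T m / \<epsilon>\<^sup>2" for m
    proof -
      have "G \<subseteq> D \<epsilon> m" unfolding G_def D_def by auto
      moreover have "D \<epsilon> m \<in> sets M" unfolding D_def by measurable
      ultimately have "prob G \<le> prob (D \<epsilon> m)" by (rule finite_measure_mono)
      then show ?thesis using Dbound[OF eps, of m] by linarith
    qed
    moreover have "(\<lambda>m. T m / \<epsilon>\<^sup>2) \<longlonglongrightarrow> 0" using tendsto_divide_zero[OF T0] by simp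
    ultimately have "prob G \<le> 0" by (intro LIMSEQ_le_const) auto
    then have "G \<in> null_sets M" using Gsets by (simp add: emeasure_eq_measure null_sets_def measure_nonneg antisym)
    from AE_not_in[OF this] AE_space show ?thesis
      by eventually_elim (auto simp: G_def not_le)
  qed
  have "AE \<omega> in M. \<forall>j::nat. \<exists>m. \<forall>k. \<bar>\<Sum>i<k. X (i + m) \<omega>\<bar> < 1 / (Suc j)"
    unfolding AE_all_countable by (intro allI AEeps) auto
  then show ?thesis
    by eventually_elim (rule cauchy_from_tails)
qed


lemma gamma_piece:
  fixes \<alpha> s lo hi :: real
  assumes a: "\<alpha> > -1/2" and s: "s > 0" and lo: "0 < lo" and hi: "lo \<le> hi"
  shows "integral {lo..hi} (\<lambda>u. u powr (2*\<alpha>) * exp (-(2 * s * u))) \<le> Gamma (1 + 2*\<alpha>) / (2 * s) powr (1 + 2*\<alpha>)"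
proof -
  define F where "F t = t powr (2*\<alpha>) / exp t" for t :: real
  have G: "(F has_integral Gamma (1 + 2*\<alpha>)) {0..}"
    unfolding F_def using Gamma_integral_real[of "1 + 2*\<alpha>"] a by simp
  have contF: "continuous_on {2 * s * lo..2 * s * hi} F"
    unfolding F_def using s lo by (intro continuous_intros) (auto simp: mult_le_0_iff)
  then have intF: "F integrable_on {2 * s * lo..2 * s * hi}" by (rule integrable_continuous_interval)
  obtain I where I: "(F has_integral I) {2 * s * lo..2 * s * hi}" using intF by blast
  have "I \<le> Gamma (1 + 2*\<alpha>)"
    by (rule has_integral_subset_le[OF _ I G]) (use s lo in \<open>auto simp: F_def mult_le_0_iff\<close>)
  have I': "(F has_integral I) (cbox (2 * s * lo) (2 * s * hi))" using I by (simp add: cbox_interval)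
  have A: "((\<lambda>u. F (2 * s * u)) has_integral (I / (2 * s))) (cbox lo hi)"
  proof -
    have eqs: "inverse s * (s * lo) = lo" "inverse s * (s * hi) = hi" "inverse s * I / 2 = I / (2 * s)"
      using s by (auto simp: field_simps)
    show ?thesis using has_integral_affinity'[OF I', of "2 * s" 0] s by (simp add: eqs cbox_interval)
  qed
  have I2: "((\<lambda>u. F (2 * s * u)) has_integral (I / (2 * s))) {lo..hi}"
    using A by (simp add: cbox_interval)
  have eq: "u powr (2*\<alpha>) * exp (-(2 * s * u)) = (2 * s) powr (-2*\<alpha>) * F (2 * s * u)" if "u \<in> {lo..hi}" for u
  proof -
    have u: "u > 0" using that lo by auto
    have "(2 * s * u) powr (2*\<alpha>) = (2 * s) powr (2*\<alpha>) * u powr (2*\<alpha>)"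
      using u s by (simp add: powr_mult)
    then show ?thesis using s unfolding F_def
      by (simp add: powr_minus field_simps exp_minus)
  qed
  have "((\<lambda>u. u powr (2*\<alpha>) * exp (-(2 * s * u))) has_integral ((2 * s) powr (-2*\<alpha>) * (I / (2 * s)))) {lo..hi}"
    by (rule has_integral_eq[OF _ has_integral_mult_right[OF I2, of "(2 * s) powr (-2*\<alpha>)"]]) (use eq in simp)
  then have "integral {lo..hi} (\<lambda>u. u powr (2*\<alpha>) * exp (-(2 * s * u))) = (2 * s) powr (-2*\<alpha>) * (I / (2 * s))"
    by (rule integral_unique)
  also have "\<dots> \<le> (2 * s) powr (-2*\<alpha>) * (Gamma (1 + 2*\<alpha>) / (2 * s))"
    using \<open>I \<le> _\<close> s by (intro mult_left_mono divide_right_mono) auto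
  also have "\<dots> = Gamma (1 + 2*\<alpha>) / (2 * s) powr (1 + 2*\<alpha>)"
    using s by (simp add: powr_add powr_minus field_simps)
  finally show ?thesis .
qed


lemma G_antimono:
  fixes \<alpha> s u v :: real
  assumes s: "s > 0" and u: "u > 0" "2*\<alpha> \<le> u" and uv: "u \<le> v"
  shows "v powr (2*\<alpha>) * exp (-((1 + 2 * s) * v)) \<le> u powr (2*\<alpha>) * exp (-((1 + 2 * s) * u))"
proof (rule DERIV_nonpos_imp_nonincreasing[OF uv, of "\<lambda>u. u powr (2*\<alpha>) * exp (-((1 + 2 * s) * u))"])
  fix x assume x: "u \<le> x" "x \<le> v"
  then have xp: "x > 0" using u by auto
  have D: "((\<lambda>u. u powr (2*\<alpha>) * exp (-((1 + 2 * s) * u))) has_real_derivative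
      (2*\<alpha> * x powr (2*\<alpha> - 1) * exp (-((1 + 2 * s) * x)) + x powr (2*\<alpha>) * (exp (-((1 + 2 * s) * x)) * (-(1 + 2 * s))))) (at x)"
    by (intro derivative_eq_intros has_real_derivative_powr[OF xp]) (use xp in auto)
  have "x powr (2*\<alpha>) = x powr (2*\<alpha> - 1) * x" using xp by (simp add: powr_diff)
  then have eq: "2*\<alpha> * x powr (2*\<alpha> - 1) * exp (-((1 + 2 * s) * x)) + x powr (2*\<alpha>) * (exp (-((1 + 2 * s) * x)) * (-(1 + 2 * s)))
     = x powr (2*\<alpha> - 1) * exp (-((1 + 2 * s) * x)) * (2*\<alpha> - (1 + 2 * s) * x)"
    by (simp add: algebra_simps)
  have sx: "0 \<le> s * x" using s xp by simp
  have "2*\<alpha> \<le> (1 + 2 * s) * x" using x u sx by (auto simp: algebra_simps)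
  then have "x powr (2*\<alpha> - 1) * exp (-((1 + 2 * s) * x)) * (2*\<alpha> - (1 + 2 * s) * x) \<le> 0"
    by (intro mult_nonneg_nonpos) auto
  then show "\<exists>y. ((\<lambda>u. u powr (2*\<alpha>) * exp (-((1 + 2 * s) * u))) has_real_derivative y) (at x) \<and> y \<le> 0"
    using D eq by auto
qed

lemma g_piece:
  fixes \<alpha> s :: real and k :: nat
  assumes s: "s > 0" and k1: "real k - 1 \<ge> 1" and la: "ln (real k - 1) \<ge> 2*\<alpha>" and lk: "ln (real k - 1) > 0"
  shows "ln (real k) powr (2*\<alpha>) / real k powr (1 + 2 * s)
          \<le> integral {ln (real k - 1)..ln (real k)} (\<lambda>u. u powr (2*\<alpha>) * exp (- (2 * s * u)))"
proof -
  define gk where "gk = ln (real k) powr (2*\<alpha>) / real k powr (1 + 2 * s)"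
  have kpos: "real k > 0" using k1 by linarith
  have gk_eq: "gk = ln (real k) powr (2*\<alpha>) * exp (-((1 + 2 * s) * ln (real k)))"
  proof -
    have e: "real k powr (1 + 2 * s) = exp ((1 + 2 * s) * ln (real k))" using kpos by (simp add: powr_def)
    have "exp (-((1 + 2 * s) * ln (real k))) = inverse (exp ((1 + 2 * s) * ln (real k)))" by (rule exp_minus)
    then show ?thesis unfolding gk_def e by (simp add: divide_inverse)
  qed
  have lo_le: "ln (real k - 1) \<le> ln (real k)" using k1 by simp
  have ex: "((\<lambda>u. gk * exp u) has_integral (gk * exp (ln (real k)) - gk * exp (ln (real k - 1)))) {ln (real k - 1)..ln (real k)}"
  proof (rule fundamental_theorem_of_calculus[OF lo_le])
    fix x assume "x \<in> {ln (real k - 1)..ln (real k)}"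
    show "((\<lambda>u. gk * exp u) has_vector_derivative gk * exp x) (at x within {ln (real k - 1)..ln (real k)})"
      by (auto intro!: derivative_eq_intros simp: has_real_derivative_iff_has_vector_derivative[symmetric])
  qed
  have "gk * exp (ln (real k)) - gk * exp (ln (real k - 1)) = gk" using kpos k1 by (simp add: algebra_simps)
  with ex have ex': "((\<lambda>u. gk * exp u) has_integral gk) {ln (real k - 1)..ln (real k)}" by simp
  have cont: "continuous_on {ln (real k - 1)..ln (real k)} (\<lambda>u. u powr (2*\<alpha>) * exp (- (2 * s * u)))"
    using lk by (intro continuous_intros) auto
  have "gk = integral {ln (real k - 1)..ln (real k)} (\<lambda>u. gk * exp u)" using integral_unique[OF ex'] by simp
  also have "\<dots> \<le> integral {ln (real k - 1)..ln (real k)} (\<lambda>u. u powr (2*\<alpha>) * exp (- (2 * s * u)))"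
  proof (rule integral_le)
    show "(\<lambda>u. gk * exp u) integrable_on {ln (real k - 1)..ln (real k)}" using ex' by blast
    show "(\<lambda>u. u powr (2*\<alpha>) * exp (- (2 * s * u))) integrable_on {ln (real k - 1)..ln (real k)}"
      using cont by (rule integrable_continuous_interval)
    fix u assume u: "u \<in> {ln (real k - 1)..ln (real k)}"
    then have up: "u > 0" "2*\<alpha> \<le> u" using lk la by auto
    have "gk \<le> u powr (2*\<alpha>) * exp (-((1 + 2 * s) * u))"
      unfolding gk_eq using G_antimono[OF s up] u by auto
    then have "gk * exp u \<le> u powr (2*\<alpha>) * exp (-((1 + 2 * s) * u)) * exp u" by simp
    also have "\<dots> = u powr (2*\<alpha>) * exp (- (2 * s * u))"
      by (simp add: mult.assoc exp_add[symmetric] algebra_simps)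
    finally show "gk * exp u \<le> u powr (2*\<alpha>) * exp (- (2 * s * u))" .
  qed
  finally show ?thesis unfolding gk_def .
qed

lemma g_sum_bound:
  fixes \<alpha> s :: real and a :: nat
  assumes a: "\<alpha> > -1/2" and s: "s > 0" and a1: "real a \<ge> 1" and la: "ln (real a) \<ge> 2*\<alpha>" and lk: "ln (real a) > 0"
  shows "summable (\<lambda>j. ln (real (j + a + 1)) powr (2*\<alpha>) / real (j + a + 1) powr (1 + 2 * s))"
    and "(\<Sum>j. ln (real (j + a + 1)) powr (2*\<alpha>) / real (j + a + 1) powr (1 + 2 * s))
           \<le> Gamma (1 + 2*\<alpha>) / (2 * s) powr (1 + 2*\<alpha>)"
proof -
  define h where "h u = u powr (2*\<alpha>) * exp (- (2 * s * u))" for u :: real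
  define g where "g j = ln (real (j + a + 1)) powr (2*\<alpha>) / real (j + a + 1) powr (1 + 2 * s)" for j
  have int: "h integrable_on {ln (real a)..b}" for b
    unfolding h_def using lk by (intro integrable_continuous_interval continuous_intros) auto
  have ps: "(\<Sum>j<N. g j) \<le> integral {ln (real a)..ln (real (N + a))} h" for N
  proof (induction N)
    case 0 then show ?case by simp
  next
    case (Suc N)
    have mono1: "ln (real a) \<le> ln (real (N + a))" using a1 by simp
    have mono2: "ln (real (N + a)) \<le> ln (real (Suc N + a))" using a1 by simp
    have "g N \<le> integral {ln (real (N + a + 1) - 1)..ln (real (N + a + 1))} h"
      unfolding g_def h_def
    proof (rule g_piece[OF s])
      show "1 \<le> real (N + a + 1) - 1" using a1 by simp
      have "ln (real a) \<le> ln (real (N + a + 1) - 1)" using a1 by simp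
      then show "2*\<alpha> \<le> ln (real (N + a + 1) - 1)" "0 < ln (real (N + a + 1) - 1)" using la lk by linarith+
    qed
    also have "real (N + a + 1) - 1 = real (N + a)" by simp
    finally have gN: "g N \<le> integral {ln (real (N + a))..ln (real (Suc N + a))} h" by simp
    have "(\<Sum>j<Suc N. g j) = (\<Sum>j<N. g j) + g N" by simp
    also have "\<dots> \<le> integral {ln (real a)..ln (real (N + a))} h + integral {ln (real (N + a))..ln (real (Suc N + a))} h"
      using Suc.IH gN by linarith
    also have "\<dots> = integral {ln (real a)..ln (real (Suc N + a))} h"
      by (rule Henstock_Kurzweil_Integration.integral_combine[OF mono1 mono2 int])
    finally show ?case .
  qed
  have bnd: "integral {ln (real a)..b} h \<le> Gamma (1 + 2*\<alpha>) / (2 * s) powr (1 + 2*\<alpha>)" if "ln (real a) \<le> b" for b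
    unfolding h_def by (rule gamma_piece[OF a s lk that])
  have ps2: "(\<Sum>j<N. g j) \<le> Gamma (1 + 2*\<alpha>) / (2 * s) powr (1 + 2*\<alpha>)" for N
    using ps[of N] bnd[of "ln (real (N + a))"] a1 by simp
  have gnn: "0 \<le> g j" for j unfolding g_def by simp
  show "summable g" by (rule summableI_nonneg_bounded[OF gnn ps2])
  then show "suminf g \<le> Gamma (1 + 2*\<alpha>) / (2 * s) powr (1 + 2*\<alpha>)" by (rule suminf_le_const[OF _ ps2])
qed


lemma (in prob_space) trunc_facts:
  fixes Y :: "'a \<Rightarrow> real" and \<theta> a q :: real
  assumes Ym[measurable]: "Y \<in> borel_measurable M" and th: "\<theta> \<ge> 0"
    and int2: "integrable M (\<lambda>\<omega>. (Y \<omega>)\<^sup>2)" and E2: "expectation (\<lambda>\<omega>. (Y \<omega>)\<^sup>2) = 1"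
    and a: "a \<ge> 0" and q: "q > 0"
  defines "Tr \<equiv> (\<lambda>\<omega>. if \<bar>Y \<omega>\<bar> \<le> \<theta> then Y \<omega> else 0)"
  defines "Z \<equiv> (\<lambda>\<omega>. a * (Tr \<omega> - expectation Tr) / q)"
  shows "Z \<in> borel_measurable M"
    and "\<And>\<omega>. \<bar>Z \<omega>\<bar> \<le> a * (2 * \<theta>) / q"
    and "expectation Z = 0"
    and "expectation (\<lambda>\<omega>. (Z \<omega>)\<^sup>2) \<le> a\<^sup>2 / q\<^sup>2"
proof -
  have Trm[measurable]: "Tr \<in> borel_measurable M" unfolding Tr_def by measurable
  have Trb: "\<bar>Tr \<omega>\<bar> \<le> \<theta>" for \<omega> unfolding Tr_def using th by auto
  have intT: "integrable M Tr"
    by (intro integrable_const_bound[where B=\<theta>] AE_I2) (use Trb in auto)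
  have intT2: "integrable M (\<lambda>\<omega>. (Tr \<omega>)\<^sup>2)"
  proof (intro integrable_const_bound[where B="\<theta>\<^sup>2"] AE_I2)
    fix \<omega> show "norm ((Tr \<omega>)\<^sup>2) \<le> \<theta>\<^sup>2" using power_mono[OF Trb[of \<omega>] abs_ge_zero, where n=2] by simp
  qed simp
  define m where "m = expectation Tr"
  have mb: "\<bar>m\<bar> \<le> \<theta>"
  proof -
    have "\<bar>m\<bar> \<le> expectation (\<lambda>\<omega>. \<bar>Tr \<omega>\<bar>)" unfolding m_def by (rule integral_abs_bound)
    also have "\<dots> \<le> expectation (\<lambda>\<omega>. \<theta>)"
      by (rule integral_mono) (use intT Trb in auto)
    finally show ?thesis by (simp add: prob_space)
  qed
  show "Z \<in> borel_measurable M" unfolding Z_def by measurable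
  show "\<bar>Z \<omega>\<bar> \<le> a * (2 * \<theta>) / q" for \<omega>
  proof -
    have "\<bar>Tr \<omega> - m\<bar> \<le> 2 * \<theta>" using Trb[of \<omega>] mb by linarith
    then have "a * \<bar>Tr \<omega> - m\<bar> \<le> a * (2 * \<theta>)" using a by (rule mult_left_mono)
    then show ?thesis unfolding Z_def m_def[symmetric] using a q by (simp add: abs_mult abs_divide divide_right_mono)
  qed
  show "expectation Z = 0" unfolding Z_def using intT by (simp add: prob_space)
  have V1: "expectation (\<lambda>\<omega>. (Tr \<omega> - m)\<^sup>2) = expectation (\<lambda>\<omega>. (Tr \<omega>)\<^sup>2) - m\<^sup>2"
  proof -
    have "expectation (\<lambda>\<omega>. (Tr \<omega> - m)\<^sup>2) = expectation (\<lambda>\<omega>. (Tr \<omega>)\<^sup>2 - 2 * m * Tr \<omega> + m\<^sup>2)"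
      by (rule Bochner_Integration.integral_cong) (auto simp: power2_diff algebra_simps)
    also have "\<dots> = expectation (\<lambda>\<omega>. (Tr \<omega>)\<^sup>2) - 2 * m * m + m\<^sup>2"
      using intT intT2 by (simp add: prob_space m_def)
    finally show ?thesis by (simp add: power2_eq_square)
  qed
  have V2: "expectation (\<lambda>\<omega>. (Tr \<omega>)\<^sup>2) - m\<^sup>2 \<le> expectation (\<lambda>\<omega>. (Y \<omega>)\<^sup>2)"
  proof -
    have "expectation (\<lambda>\<omega>. (Tr \<omega>)\<^sup>2) \<le> expectation (\<lambda>\<omega>. (Y \<omega>)\<^sup>2)"
      by (rule integral_mono[OF intT2 int2]) (auto simp: Tr_def)
    then show ?thesis by (smt (verit) zero_le_power2)
  qed
  have EZ: "expectation (\<lambda>\<omega>. (Z \<omega>)\<^sup>2) = (a / q)\<^sup>2 * expectation (\<lambda>\<omega>. (Tr \<omega> - m)\<^sup>2)"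
  proof -
    have "(Z \<omega>)\<^sup>2 = (a / q)\<^sup>2 * (Tr \<omega> - m)\<^sup>2" for \<omega>
    proof -
      have "Z \<omega> = (a / q) * (Tr \<omega> - m)" unfolding Z_def m_def by simp
      then show ?thesis by (simp only: power_mult_distrib)
    qed
    then show ?thesis by simp
  qed
  show "expectation (\<lambda>\<omega>. (Z \<omega>)\<^sup>2) \<le> a\<^sup>2 / q\<^sup>2"
  proof -
    have "expectation (\<lambda>\<omega>. (Tr \<omega> - m)\<^sup>2) \<le> 1" using V1 V2 E2 by simp
    then have "(a / q)\<^sup>2 * expectation (\<lambda>\<omega>. (Tr \<omega> - m)\<^sup>2) \<le> (a / q)\<^sup>2 * 1"
      by (rule mult_left_mono) simp
    then show ?thesis unfolding EZ by (simp add: power_divide)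
  qed
qed


lemma tb_alg:
  fixes x L ED Sa c a T P q \<rho> :: real
  assumes x: "x > 0" and \<rho>: "\<rho> > 0" and L: "L > 0" and c: "c > 0" and Sa: "Sa > 0" and ED: "ED \<ge> 1"
    and T: "T \<ge> 1" and a: "a > 0" and q: "q > 0" and P: "P \<ge> 0" and Pq: "P \<le> q\<^sup>2"
  shows "(2 * x * L / ED) * sqrt (Sa / (c * L)) * (a * (2 * (\<rho> / (a * T) * sqrt (P / (Sa * L)))) / q)
         \<le> 4 * x * \<rho> / sqrt c"
proof -
  have s1: "sqrt (Sa / (c * L)) * sqrt (P / (Sa * L)) = sqrt P / (sqrt c * L)"
  proof -
    have "sqrt (Sa / (c * L)) * sqrt (P / (Sa * L)) = sqrt (P / (c * (L * L)))"
      using Sa L c by (simp add: real_sqrt_mult[symmetric] field_simps)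
    also have "\<dots> = sqrt P / (sqrt c * L)" using L c by (simp add: real_sqrt_divide real_sqrt_mult)
    finally show ?thesis .
  qed
  have sq: "sqrt P \<le> q" using Pq q by (metis real_sqrt_abs real_sqrt_le_mono abs_of_pos)
  have "(2 * x * L / ED) * sqrt (Sa / (c * L)) * (a * (2 * (\<rho> / (a * T) * sqrt (P / (Sa * L)))) / q)
      = 4 * x * \<rho> / (ED * T * q) * (sqrt (Sa / (c * L)) * sqrt (P / (Sa * L))) * L"
    using a q L ED T by (simp add: field_simps)
  also have "\<dots> = 4 * x * \<rho> / (ED * T * sqrt c) * (sqrt P / q)"
    unfolding s1 using L q c by (simp add: field_simps)
  also have "\<dots> \<le> 4 * x * \<rho> / (ED * T * sqrt c) * 1"
    using sq q x \<rho> ED T c by (intro mult_left_mono) (auto simp: divide_le_eq_1)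
  also have "\<dots> \<le> 4 * x * \<rho> / sqrt c"
  proof -
    have "1 \<le> ED * T" using ED T by (metis mult_mono' mult_1_left zero_le_one)
    then show ?thesis using x \<rho> c
      by (simp add: divide_le_cancel frac_le)
  qed
  finally show ?thesis .
qed

lemma exponent_alg:
  fixes x L ED Sa c V :: real
  assumes x: "x > 0" and L: "L > 0" and c: "c > 0" and Sa: "Sa > 0" and ED: "ED > 0"
    and V: "V \<le> c / (2 * Sa)"
  defines "f \<equiv> sqrt (Sa / (c * L))"
  defines "t \<equiv> (2 * x * L / ED) * f"
  shows "- t * (x / f) + t\<^sup>2 * ED / 2 * V \<le> - (x\<^sup>2 * L / ED)"
proof -
  have fpos: "f > 0" unfolding f_def using Sa c L by simp
  have f2: "f\<^sup>2 = Sa / (c * L)" unfolding f_def using Sa c L by simp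
  have "t\<^sup>2 * ED / 2 * V \<le> t\<^sup>2 * ED / 2 * (c / (2 * Sa))"
    using V ED by (intro mult_left_mono) auto
  also have "t\<^sup>2 * ED / 2 * (c / (2 * Sa)) = x\<^sup>2 * L / ED"
    unfolding t_def using f2 L ED Sa c by (simp add: power_mult_distrib power_divide field_simps power2_eq_square)
  finally have "t\<^sup>2 * ED / 2 * V \<le> x\<^sup>2 * L / ED" .
  moreover have "- t * (x / f) = - (2 * x\<^sup>2 * L / ED)"
    unfolding t_def using fpos by (simp add: power2_eq_square field_simps)
  ultimately show ?thesis by (simp add: field_simps)
qed


lemma sn_facts:
  fixes \<gamma> :: real and n :: nat
  assumes g0: "0 < \<gamma>" and g1: "\<gamma> < 1" and n: "n \<ge> 2"
  shows "0 < s_seq \<gamma> n" and "s_seq \<gamma> n < 1"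
    and "ln (1 / s_seq \<gamma> n) = real n powr (1 - \<gamma>)"
    and "ln (ln (1 / s_seq \<gamma> n)) = (1 - \<gamma>) * ln (real n)"
    and "(1 - \<gamma>) * ln (real n) > 0"
    and "real n powr (1 - \<gamma>) > 1"
    and "real (M_fun (s_seq \<gamma> n)) \<ge> exp (real n powr (1 - \<gamma>)) - 1"
    and "M_fun (s_seq \<gamma> n) \<ge> 2"
proof -
  define T where "T = real n powr (1 - \<gamma>)"
  have lnT: "ln T = (1 - \<gamma>) * ln (real n)" unfolding T_def using n by simp
  have lpos: "(1 - \<gamma>) * ln (real n) > 0" using g1 n by (intro mult_pos_pos) auto
  have Tpos: "T > 0" unfolding T_def using n by simp
  have T1: "T > 1" using lnT lpos Tpos by (metis ln_less_zero_iff not_less ln_one less_le)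
  have s: "s_seq \<gamma> n = exp (- T)" unfolding s_seq_def T_def by simp
  show "0 < s_seq \<gamma> n" unfolding s by simp
  show "s_seq \<gamma> n < 1" unfolding s using Tpos by simp
  have inv: "1 / s_seq \<gamma> n = exp T" unfolding s by (simp add: exp_minus field_simps)
  show "ln (1 / s_seq \<gamma> n) = real n powr (1 - \<gamma>)" unfolding inv T_def by simp
  show "ln (ln (1 / s_seq \<gamma> n)) = (1 - \<gamma>) * ln (real n)" unfolding inv using lnT by simp
  show "(1 - \<gamma>) * ln (real n) > 0" by (rule lpos)
  show "real n powr (1 - \<gamma>) > 1" using T1 unfolding T_def .
  have eT: "exp T \<ge> 1 + T" by (rule exp_ge_add_one_self)
  have M: "M_fun (s_seq \<gamma> n) = nat \<lfloor>exp T\<rfloor>" unfolding M_fun_def inv ..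
  have "real (nat \<lfloor>exp T\<rfloor>) \<ge> exp T - 1" using eT T1 by linarith
  then show "real (M_fun (s_seq \<gamma> n)) \<ge> exp (real n powr (1 - \<gamma>)) - 1" unfolding M T_def .
  show "M_fun (s_seq \<gamma> n) \<ge> 2" unfolding M using eT T1 by linarith
qed

lemma M_ln_bound:
  fixes \<gamma> :: real and n :: nat
  assumes g0: "0 < \<gamma>" and g1: "\<gamma> < 1" and n: "n \<ge> 2"
  shows "ln (real (M_fun (s_seq \<gamma> n))) \<ge> real n powr (1 - \<gamma>) - 1"
proof -
  define T where "T = real n powr (1 - \<gamma>)"
  have T1: "T > 1" using sn_facts(6)[OF g0 g1 n] unfolding T_def .
  have Mb: "real (M_fun (s_seq \<gamma> n)) \<ge> exp T - 1" using sn_facts(7)[OF g0 g1 n] unfolding T_def .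
  have "exp T \<ge> 2" using exp_ge_add_one_self[of T] T1 by linarith
  then have "exp T / 2 \<le> real (M_fun (s_seq \<gamma> n))" using Mb by linarith
  then have "ln (exp T / 2) \<le> ln (real (M_fun (s_seq \<gamma> n)))" using sn_facts(8)[OF g0 g1 n] by (intro ln_le_cancel_iff[THEN iffD2]) auto
  moreover have "ln (exp T / 2) = T - ln 2" by (simp add: ln_div)
  moreover have "ln (2::real) < 1" by (rule ln_2_less_1)
  ultimately show ?thesis unfolding T_def by linarith
qed


theorem lemma5p4:
  fixes M :: "'a measure" and \<eta> :: "nat \<Rightarrow> 'a \<Rightarrow> real" and \<alpha> \<gamma> \<rho> :: real
  assumes "prob_space M"
    and "\<And>k. k \<ge> 1 \<Longrightarrow> \<eta> k \<in> borel_measurable M"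
    and "prob_space.indep_vars M (\<lambda>_. borel) \<eta> {1..}"
    and "\<And>k. k \<ge> 1 \<Longrightarrow> distr M borel (\<eta> k) = distr M borel (\<eta> 1)"
    and "integrable M (\<eta> 1)" and "integral\<^sup>L M (\<eta> 1) = 0"
    and "integrable M (\<lambda>\<omega>. (\<eta> 1 \<omega>)\<^sup>2)" and "integral\<^sup>L M (\<lambda>\<omega>. (\<eta> 1 \<omega>)\<^sup>2) = 1"
    and "\<alpha> > -1/2"
    and "0 < \<gamma>" and "\<gamma> < (sqrt 5 - 1) / 2"
    and "\<rho> > 0"
    and "(1 - \<gamma>) * (1 + \<gamma>)\<^sup>2
           * (2 - exp (4 * (1 + \<gamma>) * \<rho> * c_alpha \<alpha> powr (-1/2))) > 1"
  shows "AE \<omega> in M.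
           (\<forall>n\<ge>2. summable (series_term M \<eta> \<alpha> \<rho> (s_seq \<gamma> n) \<omega>)) \<and>
           limsup (\<lambda>n. ereal (f_alpha \<alpha> (s_seq \<gamma> n)
                 * suminf (series_term M \<eta> \<alpha> \<rho> (s_seq \<gamma> n) \<omega>))) \<le> ereal (1 + \<gamma>)"
proof -
  interpret P: prob_space M by (rule assms(1))
  have ind: "P.indep_vars (\<lambda>_. borel) \<eta> {1..}" by (rule assms(3))
  have alpha: "\<alpha> > -1/2" and g0: "0 < \<gamma>" and rho: "\<rho> > 0" by (fact assms)+
  have g1: "\<gamma> < 1"
  proof -
    have "sqrt 5 < 3" by (rule real_less_lsqrt) auto
    then show ?thesis using assms(11) by simp
  qed
  define c where "c = c_alpha \<alpha>"
  have cpos: "c > 0"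
  proof -
    have "Gamma (1 + 2 * \<alpha>) > 0" using alpha Gamma_real_pos_exp[of "1 + 2 * \<alpha>"] by simp
    then show ?thesis unfolding c_def c_alpha_def by simp
  qed
  define D where "D = 4 * (1 + \<gamma>) * \<rho> * c powr (-1/2)"
  define ED where "ED = exp D"
  define x where "x = 1 + \<gamma>"
  define p where "p = x\<^sup>2 * (1 - \<gamma>) / ED"
  have xpos: "x > 0" unfolding x_def using g0 by simp
  have EDpos: "ED > 0" unfolding ED_def by simp
  have D0: "D \<ge> 0" unfolding D_def using g0 rho cpos by simp
  have ED1: "ED \<ge> 1" unfolding ED_def using D0 by simp
  have p1: "p > 1"
  proof -
    have H: "(1 - \<gamma>) * x\<^sup>2 * (2 - ED) > 1" using assms(13) unfolding x_def ED_def D_def c_def .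
    have q0: "(1 - \<gamma>) * x\<^sup>2 > 0" using g1 xpos by simp
    have "2 - ED > 0"
    proof (rule ccontr)
      assume "\<not> 2 - ED > 0"
      then have "(1 - \<gamma>) * x\<^sup>2 * (2 - ED) \<le> 0" using q0 by (simp add: mult_nonneg_nonpos)
      then show False using H by simp
    qed
    have "0 \<le> (ED - 1) * (ED - 1)" by simp
    then have "ED * (2 - ED) \<le> 1" by (simp add: algebra_simps)
    then have "ED \<le> 1 / (2 - ED)" using \<open>2 - ED > 0\<close> by (simp add: field_simps)
    also have "1 / (2 - ED) < (1 - \<gamma>) * x\<^sup>2" using H \<open>2 - ED > 0\<close> by (simp add: field_simps)
    finally show ?thesis unfolding p_def using EDpos by (simp add: field_simps)
  qed
  define s where "s n = s_seq \<gamma> n" for n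
  define L where "L n = (1 - \<gamma>) * ln (real n)" for n
  define Sa where "Sa n = s n powr (1 + 2 * \<alpha>)" for n
  define f where "f n = f_alpha \<alpha> (s n)" for n
  define t where "t n = (2 * x * L n / ED) * f n" for n
  define X where "X n j \<omega> = series_term M \<eta> \<alpha> \<rho> (s n) \<omega> j" for n j \<omega>
  define g where "g n j = ln (real (j + M_fun (s n) + 1)) powr (2 * \<alpha>)
      / real (j + M_fun (s n) + 1) powr (1 + 2 * s n)" for n j
  have spos: "s n > 0" "s n < 1" if "n \<ge> 2" for n
    unfolding s_def using sn_facts[OF g0 g1 that] by auto
  have lns: "ln (1 / s n) = real n powr (1 - \<gamma>)" "ln (ln (1 / s n)) = L n" "L n > 0"
    "real n powr (1 - \<gamma>) > 1" if "n \<ge> 2" for n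
    unfolding s_def L_def using sn_facts[OF g0 g1 that] by auto
  have Sapos: "Sa n > 0" if "n \<ge> 2" for n unfolding Sa_def using spos[OF that] by simp
  have f_eq: "f n = sqrt (Sa n / (c * L n))" if "n \<ge> 2" for n
    unfolding f_def f_alpha_def Sa_def c_def using lns(2)[OF that] by simp
  have fpos: "f n > 0" if "n \<ge> 2" for n
    unfolding f_eq[OF that] using Sapos[OF that] cpos lns(3)[OF that] by simp
  have tpos: "t n > 0" if "n \<ge> 2" for n
    unfolding t_def using xpos lns(3)[OF that] EDpos fpos[OF that] by simp
  have Eeta: "integrable M (\<lambda>\<omega>. (\<eta> k \<omega>)\<^sup>2) \<and> P.expectation (\<lambda>\<omega>. (\<eta> k \<omega>)\<^sup>2) = 1" if k: "k \<ge> 1" for k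
  proof -
    have m1: "\<eta> 1 \<in> borel_measurable M" and mk: "\<eta> k \<in> borel_measurable M" using assms(2) k by auto
    have "integrable (distr M borel (\<eta> k)) (\<lambda>x. x\<^sup>2) \<longleftrightarrow> integrable M (\<lambda>\<omega>. (\<eta> k \<omega>)\<^sup>2)"
      by (rule integrable_distr_eq[OF mk]) simp
    moreover have "integrable (distr M borel (\<eta> 1)) (\<lambda>x. x\<^sup>2) \<longleftrightarrow> integrable M (\<lambda>\<omega>. (\<eta> 1 \<omega>)\<^sup>2)"
      by (rule integrable_distr_eq[OF m1]) simp
    moreover have "integral\<^sup>L (distr M borel (\<eta> k)) (\<lambda>x. x\<^sup>2) = P.expectation (\<lambda>\<omega>. (\<eta> k \<omega>)\<^sup>2)"
      by (rule integral_distr[OF mk]) simp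
    moreover have "integral\<^sup>L (distr M borel (\<eta> 1)) (\<lambda>x. x\<^sup>2) = P.expectation (\<lambda>\<omega>. (\<eta> 1 \<omega>)\<^sup>2)"
      by (rule integral_distr[OF m1]) simp
    ultimately show ?thesis using assms(4)[OF k] assms(7,8) by simp
  qed
  define Tr where "Tr n k \<omega> = (if \<bar>\<eta> k \<omega>\<bar> \<le> thr \<alpha> k \<rho> (s n) then \<eta> k \<omega> else 0)" for n k \<omega>
  define h where "h n k y = ln (real k) powr \<alpha> * ((if \<bar>y\<bar> \<le> thr \<alpha> k \<rho> (s n) then y else 0)
      - P.expectation (Tr n k)) / real k powr (1/2 + s n)" for n k y
  have Xeq: "X n j = (\<lambda>\<omega>. h n (j + M_fun (s n) + 1) (\<eta> (j + M_fun (s n) + 1) \<omega>))" for n j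
    unfolding X_def series_term_def eta_tilde_def eta_trunc_def Let_def h_def Tr_def by simp
  have Xfacts: "X n j \<in> borel_measurable M \<and> (\<forall>\<omega>. \<bar>X n j \<omega>\<bar> \<le> D / t n) \<and> P.expectation (X n j) = 0
      \<and> P.expectation (\<lambda>\<omega>. (X n j \<omega>)\<^sup>2) \<le> g n j" if n: "n \<ge> 2" for n j
  proof -
    define k where "k = j + M_fun (s n) + 1"
    have k1: "k \<ge> 1" "real k \<ge> 1" unfolding k_def by auto
    have Mn2: "M_fun (s n) \<ge> 2" unfolding s_def using sn_facts(8)[OF g0 g1 n] .
    have lnk: "ln (real k) > 0" unfolding k_def using Mn2 by simp
    define a where "a = ln (real k) powr \<alpha>"
    define q where "q = real k powr (1/2 + s n)"
    define \<theta> where "\<theta> = thr \<alpha> k \<rho> (s n)"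
    define T where "T = ln (1 / s n)"
    define PP where "PP = real k powr (1 + s n)"
    have apos: "a > 0" unfolding a_def using lnk by simp
    have qpos: "q > 0" unfolding q_def using k1 by simp
    have T1: "T \<ge> 1" unfolding T_def using lns(1,4)[OF n] by simp
    have theta_eq: "\<theta> = \<rho> / (a * T) * sqrt (PP / (Sa n * L n))"
      unfolding \<theta>_def thr_def a_def T_def PP_def Sa_def using lns(2)[OF n] by simp
    have th0: "\<theta> \<ge> 0" unfolding theta_eq using rho apos T1 Sapos[OF n] lns(3)[OF n]
      by (intro mult_nonneg_nonneg divide_nonneg_pos) (auto simp: PP_def)
    have mk: "\<eta> k \<in> borel_measurable M" using assms(2) k1 by auto
    note TF = P.trunc_facts[OF mk th0 conjunct1[OF Eeta[OF k1(1)]] conjunct2[OF Eeta[OF k1(1)]] less_imp_le[OF apos] qpos]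
    have Xk: "X n j = (\<lambda>\<omega>. a * ((if \<bar>\<eta> k \<omega>\<bar> \<le> \<theta> then \<eta> k \<omega> else 0)
        - P.expectation (\<lambda>\<omega>. if \<bar>\<eta> k \<omega>\<bar> \<le> \<theta> then \<eta> k \<omega> else 0)) / q)"
      unfolding Xeq h_def Tr_def k_def[symmetric] a_def q_def \<theta>_def by simp
    have q2: "q\<^sup>2 = real k powr (1 + 2 * s n)"
      unfolding q_def using k1 by (simp add: power2_eq_square powr_add[symmetric])
    have a2: "a\<^sup>2 = ln (real k) powr (2 * \<alpha>)"
      unfolding a_def using lnk by (simp add: power2_eq_square powr_add[symmetric])
    have PPq: "PP \<le> q\<^sup>2" unfolding q2 PP_def using k1 spos[OF n] by (intro powr_mono) auto
    have tb: "t n * (a * (2 * \<theta>) / q) \<le> D"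
    proof -
      have "t n * (a * (2 * \<theta>) / q) = (2 * x * L n / ED) * sqrt (Sa n / (c * L n)) * (a * (2 * (\<rho> / (a * T) * sqrt (PP / (Sa n * L n)))) / q)"
        unfolding t_def f_eq[OF n] theta_eq by simp
      also have "\<dots> \<le> 4 * x * \<rho> / sqrt c"
        by (rule tb_alg[OF xpos rho lns(3)[OF n] cpos Sapos[OF n] ED1 T1 apos qpos _ PPq]) (simp add: PP_def)
      also have "\<dots> = D" unfolding D_def x_def using cpos by (simp add: powr_minus_divide powr_half_sqrt)
      finally show ?thesis .
    qed
    have bD: "a * (2 * \<theta>) / q \<le> D / t n" using tb tpos[OF n] by (simp add: pos_le_divide_eq mult.commute)
    show ?thesis
    proof (intro conjI allI)
      show "X n j \<in> borel_measurable M" unfolding Xk by (rule TF(1))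
      fix \<omega> show "\<bar>X n j \<omega>\<bar> \<le> D / t n" unfolding Xk using TF(2)[of \<omega>] bD by simp
    next
      show "P.expectation (X n j) = 0" unfolding Xk by (rule TF(3))
      show "P.expectation (\<lambda>\<omega>. (X n j \<omega>)\<^sup>2) \<le> g n j"
        using TF(4) unfolding Xk g_def k_def[symmetric] a2 q2 .
    qed
  qed
  have indX: "P.indep_vars (\<lambda>_. borel) (X n) UNIV" for n
  proof -
    have "P.indep_vars (\<lambda>_. borel) (\<lambda>k \<omega>. h n k (\<eta> k \<omega>)) {1..}"
      by (rule P.indep_vars_compose2[OF ind]) (unfold h_def, measurable)
    then have "P.indep_vars (\<lambda>_. borel) (\<lambda>k \<omega>. h n k (\<eta> k \<omega>)) ((\<lambda>j. j + M_fun (s n) + 1) ` UNIV)"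
      by (rule P.indep_vars_subset) auto
    from P.indep_vars_reindex[OF _ this] have
      "P.indep_vars (\<lambda>_. borel) (\<lambda>j \<omega>. h n (j + M_fun (s n) + 1) (\<eta> (j + M_fun (s n) + 1) \<omega>)) UNIV"
      by (simp add: inj_on_def)
    then show ?thesis by (simp add: Xeq[abs_def])
  qed
  have gsum: "summable (g n)" if n: "n \<ge> 2" for n
  proof -
    define d where "d = nat \<lceil>exp (max (2 * \<alpha>) 1)\<rceil>"
    have d1: "real d \<ge> exp (max (2 * \<alpha>) 1)" unfolding d_def by linarith
    define a' where "a' = M_fun (s n) + d"
    have a1: "real a' \<ge> 1" unfolding a'_def using d1 by (smt (verit) exp_ge_add_one_self of_nat_add of_nat_0_le_iff)
    have "ln (real a') \<ge> ln (exp (max (2 * \<alpha>) 1))" unfolding a'_def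
    proof (intro ln_le_cancel_iff[THEN iffD2])
      have "0 < exp (max (2 * \<alpha>) 1)" by simp
      then have "real d > 0" using d1 by linarith
      then show "0 < real (M_fun (s n) + d)" by simp
      show "exp (max (2 * \<alpha>) 1) \<le> real (M_fun (s n) + d)" using d1 by simp
    qed simp
    then have la: "ln (real a') \<ge> max (2 * \<alpha>) 1" by simp
    have "summable (\<lambda>j. ln (real (j + a' + 1)) powr (2*\<alpha>) / real (j + a' + 1) powr (1 + 2 * s n))"
      by (rule g_sum_bound(1)[OF alpha spos(1)[OF n] a1]) (use la in auto)
    moreover have "(\<lambda>j. g n (j + d)) = (\<lambda>j. ln (real (j + a' + 1)) powr (2*\<alpha>) / real (j + a' + 1) powr (1 + 2 * s n))"
      unfolding g_def a'_def by (simp add: algebra_simps)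
    ultimately have "summable (\<lambda>j. g n (j + d))" by simp
    then show ?thesis by simp
  qed
  define K where "K = max (2 * \<alpha>) 1 + 1"
  define n0 where "n0 = max 2 (nat \<lceil>K powr (1 / (1 - \<gamma>))\<rceil>)"
  have n02: "n0 \<ge> 2" unfolding n0_def by simp
  have gbound: "(\<Sum>j. g n j) \<le> c / (2 * Sa n)" if n: "n \<ge> n0" for n
  proof -
    have n2: "n \<ge> 2" using n n02 by simp
    have "real n \<ge> K powr (1 / (1 - \<gamma>))" using n unfolding n0_def by linarith
    then have "real n powr (1 - \<gamma>) \<ge> (K powr (1 / (1 - \<gamma>))) powr (1 - \<gamma>)"
      using g1 by (intro powr_mono2) auto
    also have "(K powr (1 / (1 - \<gamma>))) powr (1 - \<gamma>) = K"
      unfolding powr_powr using g1 by (simp add: K_def)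
    finally have TK: "real n powr (1 - \<gamma>) \<ge> K" .
    have la: "ln (real (M_fun (s n))) \<ge> max (2 * \<alpha>) 1"
      using M_ln_bound[OF g0 g1 n2] TK unfolding K_def s_def by linarith
    have Mn2: "real (M_fun (s n)) \<ge> 1" using sn_facts(8)[OF g0 g1 n2] unfolding s_def by simp
    have "(\<Sum>j. g n j) \<le> Gamma (1 + 2*\<alpha>) / (2 * s n) powr (1 + 2*\<alpha>)"
      unfolding g_def by (rule g_sum_bound(2)[OF alpha spos(1)[OF n2] Mn2]) (use la in auto)
    also have "\<dots> = c / (2 * Sa n)"
    proof -
      have "(2 * s n) powr (1 + 2*\<alpha>) = 2 * 2 powr (2 * \<alpha>) * Sa n"
        unfolding Sa_def using spos[OF n2] by (simp add: powr_mult powr_add)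
      then show ?thesis unfolding c_def c_alpha_def by (simp add: field_simps)
    qed
    finally show ?thesis .
  qed
  have AEsum: "AE \<omega> in M. \<forall>n. n \<ge> 2 \<longrightarrow> summable (\<lambda>j. X n j \<omega>)"
    unfolding AE_all_countable
  proof
    fix n :: nat
    show "AE \<omega> in M. n \<ge> 2 \<longrightarrow> summable (\<lambda>j. X n j \<omega>)"
    proof (cases "n \<ge> 2")
      case True
      have "AE \<omega> in M. summable (\<lambda>j. X n j \<omega>)"
      proof (rule P.kolmogorov_as[OF indX])
        show "\<bar>X n i \<omega>\<bar> \<le> D / t n" for i \<omega> using Xfacts[OF True] by blast
        show "P.expectation (X n i) = 0" for i using Xfacts[OF True] by blast
        show "summable (\<lambda>i. P.expectation (\<lambda>\<omega>. (X n i \<omega>)\<^sup>2))"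
        proof (rule summable_comparison_test[OF _ gsum[OF True]])
          show "\<exists>N. \<forall>i\<ge>N. norm (P.expectation (\<lambda>\<omega>. (X n i \<omega>)\<^sup>2)) \<le> g n i"
            using Xfacts[OF True] by (auto intro!: exI[of _ 0] simp: integral_nonneg_AE)
        qed
      qed
      then show ?thesis by auto
    qed simp
  qed
  have tail: "P.prob {\<omega>\<in>space M. x < f n * (\<Sum>j<N. X n j \<omega>)} \<le> real n powr (- p)" if n: "n \<ge> n0" for n N
  proof -
    have n2: "n \<ge> 2" using n n02 by simp
    have fp: "f n > 0" by (rule fpos[OF n2])
    have seteq: "{\<omega>\<in>space M. x < f n * (\<Sum>j<N. X n j \<omega>)} = {\<omega>\<in>space M. x / f n < (\<Sum>j\<in>{..<N}. X n j \<omega>)}"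
      using fp by (auto simp: pos_divide_less_eq mult.commute)
    define V where "V = (\<Sum>j\<in>{..<N}. P.expectation (\<lambda>\<omega>. (X n j \<omega>)\<^sup>2))"
    have "P.prob {\<omega>\<in>space M. x / f n < (\<Sum>j\<in>{..<N}. X n j \<omega>)}
        \<le> exp (- t n * (x / f n) + (t n)\<^sup>2 * exp D / 2 * V)"
      unfolding V_def
    proof (rule P.exp_sum_tail)
      show "P.indep_vars (\<lambda>_. borel) (X n) {..<N}" by (rule P.indep_vars_subset[OF indX]) auto
      show "\<bar>X n i \<omega>\<bar> \<le> D / t n" for i \<omega> using Xfacts[OF n2] by blast
      show "t n * (D / t n) \<le> D" using tpos[OF n2] by simp
      show "0 \<le> t n" using tpos[OF n2] by simp
      show "P.expectation (X n i) = 0" for i using Xfacts[OF n2] by blast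
    qed simp
    also have "\<dots> \<le> exp (- (x\<^sup>2 * L n / ED))"
    proof -
      have "V \<le> (\<Sum>j<N. g n j)" unfolding V_def using Xfacts[OF n2] by (intro sum_mono) blast
      also have "\<dots> \<le> (\<Sum>j. g n j)"
        by (rule sum_le_suminf[OF gsum[OF n2]]) (auto simp: g_def)
      also have "\<dots> \<le> c / (2 * Sa n)" by (rule gbound[OF n])
      finally have Vb: "V \<le> c / (2 * Sa n)" .
      have "- t n * (x / f n) + (t n)\<^sup>2 * ED / 2 * V \<le> - (x\<^sup>2 * L n / ED)"
        unfolding t_def f_eq[OF n2]
        by (rule exponent_alg[OF xpos lns(3)[OF n2] cpos Sapos[OF n2] EDpos Vb])
      then show ?thesis unfolding ED_def by simp
    qed
    also have "\<dots> = real n powr (- p)"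
    proof -
      have "- (x\<^sup>2 * L n / ED) = - p * ln (real n)" unfolding L_def p_def by (simp add: field_simps)
      then show ?thesis using n2 by (simp add: powr_def)
    qed
    finally show ?thesis unfolding seteq .
  qed
  define C where "C n m = {\<omega>\<in>space M. \<forall>N\<ge>m. x < f n * (\<Sum>j<N. X n j \<omega>)}" for n m
  define A where "A n = (if n \<ge> n0 then (\<Union>m. C n m) else {})" for n
  have Csets: "C n m \<in> sets M" if n2: "n \<ge> 2" for n m
  proof -
    have Xm[measurable]: "X n j \<in> borel_measurable M" for j using Xfacts[OF n2] by blast
    show ?thesis unfolding C_def by measurable
  qed
  have Asets: "A n \<in> sets M" for n
    unfolding A_def using Csets n02 by auto
  have Ab: "P.prob (A n) \<le> real n powr (- p)" for n
  proof (cases "n \<ge> n0")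
    case True
    then have n2: "n \<ge> 2" using n02 by simp
    have Cb: "P.prob (C n m) \<le> real n powr (- p)" for m
    proof -
      have "C n m \<subseteq> {\<omega>\<in>space M. x < f n * (\<Sum>j<m. X n j \<omega>)}" unfolding C_def by auto
      moreover have "{\<omega>\<in>space M. x < f n * (\<Sum>j<m. X n j \<omega>)} \<in> sets M"
      proof -
        have Xm[measurable]: "X n j \<in> borel_measurable M" for j using Xfacts[OF n2] by blast
        show ?thesis by measurable
      qed
      ultimately have "P.prob (C n m) \<le> P.prob {\<omega>\<in>space M. x < f n * (\<Sum>j<m. X n j \<omega>)}"
        by (rule P.finite_measure_mono)
      then show ?thesis using tail[OF True, of m] by linarith
    qed
    have inc: "incseq (C n)" unfolding C_def incseq_def by auto
    have "(\<lambda>m. P.prob (C n m)) \<longlonglongrightarrow> P.prob (\<Union>m. C n m)"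
      using Csets[OF n2] inc by (intro Lim_measure_incseq) auto
    then have "P.prob (\<Union>m. C n m) \<le> real n powr (- p)" using Cb by (intro LIMSEQ_le_const2) auto
    then show ?thesis unfolding A_def using True by simp
  next
    case False then show ?thesis unfolding A_def by simp
  qed
  have summA: "summable (\<lambda>n. P.prob (A n))"
  proof (rule summable_comparison_test[OF _ iffD2[OF summable_real_powr_iff]])
    show "- p < -1" using p1 by simp
    show "\<exists>N. \<forall>n\<ge>N. norm (P.prob (A n)) \<le> real n powr (- p)" using Ab by auto
  qed
  have AEev: "AE \<omega> in M. eventually (\<lambda>n. \<omega> \<in> space M - A n) sequentially"
    by (rule borel_cantelli_AE1[OF Asets _ summA]) (simp add: P.emeasure_eq_measure)
  show ?thesis
    using AEsum AEev
  proof eventually_elim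
    case (elim \<omega>)
    have S: "summable (\<lambda>j. X n j \<omega>)" if "n \<ge> 2" for n using elim(1) that by blast
    show ?case
    proof
      show "\<forall>n\<ge>2. summable (series_term M \<eta> \<alpha> \<rho> (s_seq \<gamma> n) \<omega>)"
        using S unfolding X_def s_def by (simp add: fun_eq_iff)
      have ev: "eventually (\<lambda>n. f n * (\<Sum>j. X n j \<omega>) \<le> x) sequentially"
        using elim(2) eventually_ge_at_top[of n0]
      proof eventually_elim
        case (elim n)
        have n2: "n \<ge> 2" using elim(2) n02 by simp
        show ?case
        proof (rule ccontr)
          assume "\<not> f n * (\<Sum>j. X n j \<omega>) \<le> x"
          then have lt: "x < f n * (\<Sum>j. X n j \<omega>)" by simp
          have "(\<lambda>N. f n * (\<Sum>j<N. X n j \<omega>)) \<longlonglongrightarrow> f n * (\<Sum>j. X n j \<omega>)"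
            by (intro tendsto_mult_left summable_LIMSEQ S[OF n2])
          from order_tendstoD(1)[OF this lt] obtain m where "\<forall>N\<ge>m. x < f n * (\<Sum>j<N. X n j \<omega>)"
            by (auto simp: eventually_sequentially)
          then have "\<omega> \<in> C n m" unfolding C_def using elim(1) by auto
          then have "\<omega> \<in> A n" unfolding A_def using elim(2) by auto
          then show False using elim(1) by simp
        qed
      qed
      have "limsup (\<lambda>n. ereal (f n * (\<Sum>j. X n j \<omega>))) \<le> ereal x"
        by (rule Limsup_bounded) (use ev in \<open>auto elim: eventually_mono\<close>)
      then show "limsup (\<lambda>n. ereal (f_alpha \<alpha> (s_seq \<gamma> n) * suminf (series_term M \<eta> \<alpha> \<rho> (s_seq \<gamma> n) \<omega>))) \<le> ereal (1 + \<gamma>)"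
        unfolding f_def X_def s_def x_def by (simp add: fun_eq_iff)
    qed
  qed
qed

end
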